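(* If $\Gamma\vdash M$ is derivable in $\ell\Lambda_\infty$ and $M\to N$, then $\Gamma\vdash N$ is derivable in $\ell\Lambda_\infty$.
   Context: Preterms are possibly infinite trees generated (coinductively) by $M,N ::= x \mid MN \mid \lambda x.M \mid \lambda^{\downarrow}x.M \mid \lambda^{\uparrow}x.M \mid \downarrow M \mid \uparrow M$ ($\downarrow M$ an inductive box, $\uparrow M$ a coinductive box); $M[N/x]$ is capture-avoiding substitution (coinductively defined). A pattern is $x$, $\downarrow x$ or $\uparrow x$; an environment is a finite set of patterns, each variable in at most one pattern; a linear environment is a set of variables; $\downarrow\Theta=\{\downarrow y: y\in\Theta\}$, $\uparrow\Theta=\{\uparrow y: y\in\Theta\}$; commas denote disjoint unions. The system $\ell\Lambda_\infty$ has rules (with $\Theta,\Xi$ linear): (vl) $\downarrow\Theta,\uparrow\Xi,x\vdash x$; (vi) $\downarrow\Theta,\uparrow\Xi,\downarrow x\vdash x$; (vc) $\downarrow\Theta,\uparrow\Xi,\uparrow x\vdash x$; (a) from $\Gamma,\downarrow\Theta,\uparrow\Xi\vdash M$ and $\Delta,\downarrow\Theta,\uparrow\Xi\vdash N$ infer $\Gamma,\Delta,\downarrow\Theta,\uparrow\Xi\vdash MN$; (ll) from $\Gamma,x\vdash M$ infer $\Gamma\vdash\lambda x.M$; (li) from $\Gamma,\downarrow x\vdash M$ infer $\Gamma\vdash\lambda^\downarrow x.M$; (lc) from $\Gamma,\uparrow x\vdash M$ infer $\Gamma\vdash \lambda^\uparrow x.M$; (mi) from $\downarrow\Theta,\uparrow\Xi\vdash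 M$ infer $\downarrow\Theta,\uparrow\Xi\vdash \downarrow M$; (mc) from $\downarrow\Theta,\uparrow\Xi\vdash M$ infer $\downarrow\Theta,\uparrow\Xi\vdash\uparrow M$. (mc) is coinductive, the others inductive: derivable judgments are roots of possibly infinite derivation trees in which every infinite branch contains infinitely many (mc) instances. Basic reduction $\mapsto$: $(\lambda x.M)N\mapsto M[N/x]$, $(\lambda^\downarrow x.M)(\downarrow N)\mapsto M[N/x]$, $(\lambda^\uparrow x.M)(\uparrow N)\mapsto M[N/x]$. A context $C$ is a preterm with a single hole occurring at a finite position; $M\to N$ iff $M=C[L]$, $N=C[P]$ for some context $C$ and $L\mapsto P$. *)

theory Defs
  imports Main
begin

text \<open>Variables are de Bruijn indices (natural numbers); this represents
  named preterms modulo alpha-conversion, so that capture-avoiding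
  substitution is well defined on infinite trees.\<close>

codatatype pterm =
    PVar nat
  | PApp pterm pterm
  | PLam pterm
  | PLamI pterm         (* \<lambda>\<^sup>\<down>x.M *)
  | PLamC pterm         (* \<lambda>\<^sup>\<up>x.M *)
  | PBoxI pterm
  | PBoxC pterm

primcorec shift :: "nat \<Rightarrow> pterm \<Rightarrow> pterm" where
  "shift k M = (case M of
      PVar i \<Rightarrow> PVar (if i < k then i else Suc i)
    | PApp A B \<Rightarrow> PApp (shift k A) (shift k B)
    | PLam A \<Rightarrow> PLam (shift (Suc k) A)
    | PLamI A \<Rightarrow> PLamI (shift (Suc k) A)
    | PLamC A \<Rightarrow> PLamC (shift (Suc k) A)
    | PBoxI A \<Rightarrow> PBoxI (shift k A)
    | PBoxC A \<Rightarrow> PBoxC (shift k A))"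

text \<open>Capture-avoiding substitution, coinductively defined as a (functional)
  relation: \<open>subst_rel k N M P\<close> means \<open>P = M[N/k]\<close>, where index k
  is removed (larger free indices decremented).\<close>

coinductive subst_rel :: "nat \<Rightarrow> pterm \<Rightarrow> pterm \<Rightarrow> pterm \<Rightarrow> bool" where
  s_lt: "i < k \<Longrightarrow> subst_rel k N (PVar i) (PVar i)"
| s_eq: "subst_rel k N (PVar k) N"
| s_gt: "k < i \<Longrightarrow> subst_rel k N (PVar i) (PVar (i - 1))"
| s_app: "subst_rel k N A A' \<Longrightarrow> subst_rel k N B B' \<Longrightarrow>
           subst_rel k N (PApp A B) (PApp A' B')"
| s_lam: "subst_rel (Suc k) (shift 0 N) A A' \<Longrightarrow> subst_rel k N (PLam A) (PLam A')"
| s_lamI: "subst_rel (Suc k) (shift 0 N) A A' \<Longrightarrow> subst_rel k N (PLamI A) (PLamI A')"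
| s_lamC: "subst_rel (Suc k) (shift 0 N) A A' \<Longrightarrow> subst_rel k N (PLamC A) (PLamC A')"
| s_boxI: "subst_rel k N A A' \<Longrightarrow> subst_rel k N (PBoxI A) (PBoxI A')"
| s_boxC: "subst_rel k N A A' \<Longrightarrow> subst_rel k N (PBoxC A) (PBoxC A')"

text \<open>Pattern kinds: \<open>x\<close> (linear), \<open>\<down>x\<close> (inductive), \<open>\<up>x\<close> (coinductive).
  An environment is a finite partial map from variables to pattern kinds
  (so each variable occurs in at most one pattern).\<close>

datatype pkind = PatL | PatI | PatC

type_synonym env = "nat \<rightharpoonup> pkind"

definition nonlin :: "env \<Rightarrow> bool" where
  "nonlin \<Gamma> \<longleftrightarrow> (\<forall>x. \<Gamma> x \<noteq> Some PatL)"

definition ext_env :: "pkind \<Rightarrow> env \<Rightarrow> env" where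
  "ext_env p \<Gamma> = case_nat (Some p) \<Gamma>"

text \<open>Mixed induction/coinduction: the (mc) rule is coinductive, the others
  inductive. This is the nested fixpoint \<open>\<nu>X. \<mu>Y. F(X,Y)\<close>, i.e. derivations
  in which every infinite branch passes through infinitely many (mc).\<close>

inductive ll_step :: "(env \<Rightarrow> pterm \<Rightarrow> bool) \<Rightarrow> env \<Rightarrow> pterm \<Rightarrow> bool"
  for X :: "env \<Rightarrow> pterm \<Rightarrow> bool" where
  vl: "nonlin \<Gamma> \<Longrightarrow> finite (dom \<Gamma>) \<Longrightarrow> \<Gamma> x = None \<Longrightarrow> ll_step X (\<Gamma>(x \<mapsto> PatL)) (PVar x)"
| vi: "nonlin \<Gamma> \<Longrightarrow> finite (dom \<Gamma>) \<Longrightarrow> \<Gamma> x = None \<Longrightarrow> ll_step X (\<Gamma>(x \<mapsto> PatI)) (PVar x)"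
| vc: "nonlin \<Gamma> \<Longrightarrow> finite (dom \<Gamma>) \<Longrightarrow> \<Gamma> x = None \<Longrightarrow> ll_step X (\<Gamma>(x \<mapsto> PatC)) (PVar x)"
| a: "dom \<Gamma> \<inter> dom \<Delta> = {} \<Longrightarrow> dom \<Gamma> \<inter> dom S = {} \<Longrightarrow> dom \<Delta> \<inter> dom S = {} \<Longrightarrow>
      nonlin S \<Longrightarrow> ll_step X (\<Gamma> ++ S) M \<Longrightarrow> ll_step X (\<Delta> ++ S) N \<Longrightarrow>
      ll_step X (\<Gamma> ++ \<Delta> ++ S) (PApp M N)"
| ll: "ll_step X (ext_env PatL \<Gamma>) M \<Longrightarrow> ll_step X \<Gamma> (PLam M)"
| li: "ll_step X (ext_env PatI \<Gamma>) M \<Longrightarrow> ll_step X \<Gamma> (PLamI M)"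
| lc: "ll_step X (ext_env PatC \<Gamma>) M \<Longrightarrow> ll_step X \<Gamma> (PLamC M)"
| mi: "nonlin \<Gamma> \<Longrightarrow> ll_step X \<Gamma> M \<Longrightarrow> ll_step X \<Gamma> (PBoxI M)"
| mc: "nonlin \<Gamma> \<Longrightarrow> finite (dom \<Gamma>) \<Longrightarrow> X \<Gamma> M \<Longrightarrow> ll_step X \<Gamma> (PBoxC M)"

lemma ll_step_mono [mono]: "X \<le> Y \<Longrightarrow> ll_step X \<le> ll_step Y"
proof (intro le_funI le_boolI)
  fix \<Gamma> M assume XY: "X \<le> Y" and H: "ll_step X \<Gamma> M"
  from H show "ll_step Y \<Gamma> M"
    by (induction rule: ll_step.induct) (use XY in \<open>auto intro: ll_step.intros simp del: fun_upd_apply\<close>)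
qed

coinductive derivable :: "env \<Rightarrow> pterm \<Rightarrow> bool" where
  "ll_step derivable \<Gamma> M \<Longrightarrow> derivable \<Gamma> M"

inductive basic_red :: "pterm \<Rightarrow> pterm \<Rightarrow> bool" where
  "subst_rel 0 N M P \<Longrightarrow> basic_red (PApp (PLam M) N) P"
| "subst_rel 0 N M P \<Longrightarrow> basic_red (PApp (PLamI M) (PBoxI N)) P"
| "subst_rel 0 N M P \<Longrightarrow> basic_red (PApp (PLamC M) (PBoxC N)) P"

datatype ctx =
    Hole
  | CAppL ctx pterm
  | CAppR pterm ctx
  | CLam ctx
  | CLamI ctx
  | CLamC ctx
  | CBoxI ctx
  | CBoxC ctx

primrec fill :: "ctx \<Rightarrow> pterm \<Rightarrow> pterm" where
  "fill Hole L = L"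
| "fill (CAppL C N) L = PApp (fill C L) N"
| "fill (CAppR M C) L = PApp M (fill C L)"
| "fill (CLam C) L = PLam (fill C L)"
| "fill (CLamI C) L = PLamI (fill C L)"
| "fill (CLamC C) L = PLamC (fill C L)"
| "fill (CBoxI C) L = PBoxI (fill C L)"
| "fill (CBoxC C) L = PBoxC (fill C L)"

definition red :: "pterm \<Rightarrow> pterm \<Rightarrow> bool" where
  "red M N \<longleftrightarrow> (\<exists>C L P. M = fill C L \<and> N = fill C P \<and> basic_red L P)"

end

theory Submission
  imports Defs
begin

lemma shift_simps [simp]:
  "shift k (PVar i) = PVar (if i < k then i else Suc i)"
  "shift k (PApp A B) = PApp (shift k A) (shift k B)"
  "shift k (PLam A) = PLam (shift (Suc k) A)"
  "shift k (PLamI A) = PLamI (shift (Suc k) A)"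
  "shift k (PLamC A) = PLamC (shift (Suc k) A)"
  "shift k (PBoxI A) = PBoxI (shift k A)"
  "shift k (PBoxC A) = PBoxC (shift k A)"
  by (subst shift.code; simp)+

lemma ll_step_mono': "ll_step X E M \<Longrightarrow> (\<And>a b. X a b \<Longrightarrow> Y a b) \<Longrightarrow> ll_step Y E M"
  using ll_step_mono[of X Y] by (auto simp: le_fun_def)

lemma der_unfold: "derivable E M \<longleftrightarrow> ll_step derivable E M"
  by (subst derivable.simps) simp

lemma dom_ext_env: "dom (ext_env p G) = insert 0 (Suc ` dom G)"
proof (rule set_eqI)
  fix j show "j \<in> dom (ext_env p G) \<longleftrightarrow> j \<in> insert 0 (Suc ` dom G)"
    by (cases j) (auto simp: ext_env_def)
qed
lemma finite_ext_env [simp]: "finite (dom (ext_env p G)) \<longleftrightarrow> finite (dom G)"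
  by (simp add: dom_ext_env finite_image_iff)

lemma ll_step_finite: "ll_step X E M \<Longrightarrow> finite (dom E)"
  by (induction rule: ll_step.induct) (auto simp del: fun_upd_apply)

definition compat_env :: "env \<Rightarrow> env \<Rightarrow> bool" where
  "compat_env A B \<longleftrightarrow> (\<forall>j a b. A j = Some a \<longrightarrow> B j = Some b \<longrightarrow> a = b \<and> a \<noteq> PatL)"

lemma app_intro:
  assumes "ll_step X E1 M" "ll_step X E2 N" "compat_env E1 E2"
  shows "ll_step X (E1 ++ E2) (PApp M N)"
proof -
  define S where "S = E1 |` (dom E1 \<inter> dom E2)"
  define G where "G = E1 |` (- dom E2)"
  define D where "D = E2 |` (- dom E1)"
  have 1: "G ++ S = E1" unfolding G_def S_def
    by (rule ext) (auto simp: map_add_def restrict_map_def split: option.splits simp flip: not_None_eq)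
  have 2: "D ++ S = E2" using assms(3) unfolding D_def S_def compat_env_def
    by (intro ext) (auto simp: map_add_def restrict_map_def split: option.splits simp flip: not_None_eq)
  have 3: "G ++ D ++ S = E1 ++ E2" using assms(3) unfolding G_def D_def S_def compat_env_def
    by (intro ext) (auto simp: map_add_def restrict_map_def split: option.splits simp flip: not_None_eq)
  have "nonlin S" using assms(3) unfolding S_def compat_env_def nonlin_def
    by (auto simp: restrict_map_def)
  moreover have "dom G \<inter> dom D = {}" "dom G \<inter> dom S = {}" "dom D \<inter> dom S = {}"
    unfolding G_def D_def S_def by auto
  ultimately have "ll_step X (G ++ D ++ S) (PApp M N)"
    using assms(1,2) 1 2 by (intro ll_step.a) auto
  thus ?thesis using 3 by simp
qed

lemma app_split:
  assumes "dom G \<inter> dom D = {}" "dom G \<inter> dom S = {}" "dom D \<inter> dom S = {}" "nonlin S"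
  shows "compat_env (G ++ S) (D ++ S)" "G ++ D ++ S = (G ++ S) ++ (D ++ S)"
proof -
  show "compat_env (G ++ S) (D ++ S)" unfolding compat_env_def
  proof (intro allI impI)
    fix j a b assume A: "(G ++ S) j = Some a" "(D ++ S) j = Some b"
    show "a = b \<and> a \<noteq> PatL"
    proof (cases "S j")
      case None
      then have "G j = Some a" "D j = Some b" using A by (auto simp: map_add_def)
      then show ?thesis using assms(1) by auto
    next
      case (Some c) then show ?thesis using A assms(4) by (auto simp: nonlin_def)
    qed
  qed
  show "G ++ D ++ S = (G ++ S) ++ (D ++ S)"
    by (rule ext) (simp add: map_add_def split: option.splits)
qed


inductive_cases sub_var: "subst_rel k N (PVar x) P"
inductive_cases sub_app: "subst_rel k N (PApp A B) P"
inductive_cases sub_lam: "subst_rel k N (PLam A) P"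
inductive_cases sub_lamI: "subst_rel k N (PLamI A) P"
inductive_cases sub_lamC: "subst_rel k N (PLamC A) P"
inductive_cases sub_boxI: "subst_rel k N (PBoxI A) P"
inductive_cases sub_boxC: "subst_rel k N (PBoxC A) P"

inductive_cases ll_app: "ll_step X E (PApp A B)"
inductive_cases ll_lam: "ll_step X E (PLam A)"
inductive_cases ll_lamI: "ll_step X E (PLamI A)"
inductive_cases ll_lamC: "ll_step X E (PLamC A)"
inductive_cases ll_boxI: "ll_step X E (PBoxI A)"
inductive_cases ll_boxC: "ll_step X E (PBoxC A)"

lemma var_rule:
  assumes "nonlin (F(y:=None))" "finite (dom F)" "F y = Some p"
  shows "ll_step X F (PVar y)"
proof -
  define G where "G = F(y:=None)"
  have eq: "F = G(y \<mapsto> p)" using assms(3) by (auto simp: fun_eq_iff G_def)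
  have f: "finite (dom G)" "nonlin G" "G y = None" using assms(1,2) by (auto simp: G_def)
  have "ll_step X (G(y \<mapsto> p)) (PVar y)"
    by (cases p) (use f in \<open>auto intro: ll_step.intros simp del: fun_upd_apply\<close>)
  then show ?thesis by (simp only: eq)
qed

lemma compat_sub: "compat_env E1 E2 \<Longrightarrow> E1 j = Some a \<Longrightarrow> (E1 ++ E2) j = Some a"
  by (auto simp: compat_env_def map_add_def split: option.splits)

lemma compat_mono: "(\<And>j a. A j = Some a \<Longrightarrow> B j = Some a) \<Longrightarrow> compat_env B D \<Longrightarrow> compat_env A D"
  by (auto simp: compat_env_def) blast+

lemma compat_sym: "compat_env A B \<Longrightarrow> compat_env B A"
  by (auto simp: compat_env_def)

lemma app_elim:
  assumes "ll_step X E (PApp A B)"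
  obtains E1 E2 where "E = E1 ++ E2" "compat_env E1 E2" "ll_step X E1 A" "ll_step X E2 B"
  using assms apply (rule ll_app) using that app_split by metis

definition del :: "nat \<Rightarrow> env \<Rightarrow> env" where
  "del k E = (\<lambda>j. if j < k then E j else E (Suc j))"
definition ins :: "nat \<Rightarrow> env \<Rightarrow> env" where
  "ins k D = (\<lambda>j. if j < k then D j else if j = k then None else D (j - 1))"
definition dk :: "nat \<Rightarrow> nat \<Rightarrow> nat" where
  "dk k x = (if x < k then x else x - 1)"

lemma finite_del: "finite (dom E) \<Longrightarrow> finite (dom (del k E))"
proof -
  assume f: "finite (dom E)"
  have "dom (del k E) \<subseteq> {..<k} \<union> (\<lambda>j. j - 1) ` dom E"
  proof
    fix j assume "j \<in> dom (del k E)"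
    then show "j \<in> {..<k} \<union> (\<lambda>j. j - 1) ` dom E"
      by (cases "j < k") (auto simp: del_def intro!: image_eqI[where x="Suc j"])
  qed
  then show ?thesis using f by (meson finite_Un finite_imageI finite_lessThan finite_subset)
qed

lemma finite_ins: "finite (dom E) \<Longrightarrow> finite (dom (ins k E))"
proof -
  assume f: "finite (dom E)"
  have "dom (ins k E) \<subseteq> {..<k} \<union> Suc ` dom E"
  proof
    fix j assume "j \<in> dom (ins k E)"
    then show "j \<in> {..<k} \<union> Suc ` dom E"
      by (cases "j < k") (auto simp: ins_def intro!: image_eqI[where x="j - 1"] split: if_splits)
  qed
  then show ?thesis using f by (meson finite_Un finite_imageI finite_lessThan finite_subset)
qed

lemma nonlin_del: "nonlin E \<Longrightarrow> nonlin (del k E)"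
  by (auto simp: nonlin_def del_def)
lemma nonlin_ins: "nonlin E \<Longrightarrow> nonlin (ins k E)"
  by (auto simp: nonlin_def ins_def)
lemma nonlin_add: "nonlin A \<Longrightarrow> nonlin B \<Longrightarrow> nonlin (A ++ B)"
  by (auto simp: nonlin_def map_add_def split: option.splits)
lemma finite_add: "finite (dom A) \<Longrightarrow> finite (dom B) \<Longrightarrow> finite (dom (A ++ B))"
  by simp

lemma del_add: "del k (A ++ B) = del k A ++ del k B"
  by (auto simp: fun_eq_iff del_def map_add_def)
lemma ins_add: "ins k (A ++ B) = ins k A ++ ins k B"
  by (auto simp: fun_eq_iff ins_def map_add_def)
lemma compat_del: "compat_env A B \<Longrightarrow> compat_env (del k A) (del k B)"
  by (auto simp: compat_env_def del_def)
lemma compat_ins: "compat_env A B \<Longrightarrow> compat_env (ins k A) (ins k B)"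
  by (auto simp: compat_env_def ins_def)
lemma ext_del: "ext_env q (del k E) = del (Suc k) (ext_env q E)"
  by (auto simp: fun_eq_iff del_def ext_env_def split: nat.splits)
lemma ext_ins: "ext_env q (ins k E) = ins (Suc k) (ext_env q E)"
  by (auto simp: fun_eq_iff ins_def ext_env_def split: nat.splits)
lemma ext_env_add_ins: "ext_env q (A ++ B) = ext_env q A ++ ins 0 B"
  by (auto simp: fun_eq_iff ins_def ext_env_def map_add_def split: nat.splits option.splits)
lemma del_ext0: "del 0 (ext_env q E) = E"
  by (auto simp: fun_eq_iff del_def ext_env_def)
lemma ext_Suc: "ext_env q E (Suc k) = E k"
  by (simp add: ext_env_def)
lemma ext_0: "ext_env q E 0 = Some q"
  by (simp add: ext_env_def)
lemma ins_upd: "ins k (G(x \<mapsto> p)) = (ins k G)((if x < k then x else Suc x) \<mapsto> p)"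
  by (auto simp: fun_eq_iff ins_def)
lemma ins_at: "ins k G (if x < k then x else Suc x) = G x"
  by (auto simp: ins_def)


lemma var_rule_upd: "nonlin F \<Longrightarrow> finite (dom F) \<Longrightarrow> ll_step X (F(y \<mapsto> p)) (PVar y)"
  by (rule var_rule[where p=p]) (auto simp: nonlin_def)

lemma shift_step:
  assumes "ll_step derivable D N"
  shows "ll_step (\<lambda>E P. (\<exists>D N k. E = ins k D \<and> P = shift k N \<and> derivable D N) \<or> derivable E P)
           (ins k D) (shift k N)"
  using assms
proof (induction arbitrary: k rule: ll_step.induct)
  case (vl G x)
  show ?case unfolding shift_simps ins_upd
    by (rule var_rule_upd) (use nonlin_ins[OF vl(1), of k] finite_ins[OF vl(2), of k] in auto)
next
  case (vi G x)
  show ?case unfolding shift_simps ins_upd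
    by (rule var_rule_upd) (use nonlin_ins[OF vi(1), of k] finite_ins[OF vi(2), of k] in auto)
next
  case (vc G x)
  show ?case unfolding shift_simps ins_upd
    by (rule var_rule_upd) (use nonlin_ins[OF vc(1), of k] finite_ins[OF vc(2), of k] in auto)
next
  case (a G D S M N)
  have c: "compat_env (G ++ S) (D ++ S)" and e: "G ++ D ++ S = (G ++ S) ++ (D ++ S)"
    using app_split[OF a(1-4)] by auto
  show ?case unfolding e ins_add[of k "G ++ S"] shift_simps
    by (rule app_intro) (use a compat_ins[OF c] in \<open>auto simp: ins_add\<close>)
next
  case (ll G M) then show ?case by (auto intro!: ll_step.ll simp: ext_ins)
next
  case (li G M) then show ?case by (auto intro!: ll_step.li simp: ext_ins)
next
  case (lc G M) then show ?case by (auto intro!: ll_step.lc simp: ext_ins)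
next
  case (mi G M) then show ?case by (auto intro!: ll_step.mi simp: nonlin_ins)
next
  case (mc G M) then show ?case by (auto intro!: ll_step.mc simp: nonlin_ins finite_ins)
qed

lemma shift_der: "derivable D N \<Longrightarrow> derivable (ins k D) (shift k N)"
proof -
  assume "derivable D N"
  then have "\<exists>D' N' k'. ins k D = ins k' D' \<and> shift k N = shift k' N' \<and> derivable D' N'" by blast
  then show ?thesis
  proof (rule derivable.coinduct)
    fix E P assume "\<exists>D' N' k'. E = ins k' D' \<and> P = shift k' N' \<and> derivable D' N'"
    then obtain D' N' k' where h: "E = ins k' D'" "P = shift k' N'" "derivable D' N'" by blast
    have "ll_step (\<lambda>E P. (\<exists>D N k. E = ins k D \<and> P = shift k N \<and> derivable D N) \<or> derivable E P) E P"
      unfolding h(1,2) by (rule shift_step) (use h(3) der_unfold in blast)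
    then show "\<exists>\<Gamma> M. E = \<Gamma> \<and> P = M \<and> ll_step (\<lambda>E P. (\<exists>D N k. E = ins k D \<and> P = shift k N \<and> derivable D N) \<or> derivable E P) \<Gamma> M"
      by blast
  qed
qed



definition subenv :: "env \<Rightarrow> env \<Rightarrow> bool" where
  "subenv D E \<longleftrightarrow> (\<forall>j a. D j = Some a \<longrightarrow> E j = Some a)"
definition extnl :: "env \<Rightarrow> env \<Rightarrow> bool" where
  "extnl D E \<longleftrightarrow> (\<forall>j. D j = None \<longrightarrow> E j \<noteq> Some PatL)"

lemma compat_addW: "compat_env A B \<Longrightarrow> nonlin W \<Longrightarrow> compat_env (A ++ W) (B ++ W)"
  by (auto simp: compat_env_def nonlin_def map_add_def split: option.splits)

lemma subenv_ext: "subenv D D' \<Longrightarrow> subenv (ext_env q D) (ext_env q D')"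
  by (auto simp: subenv_def ext_env_def split: nat.splits)
lemma extnl_ext: "extnl D D' \<Longrightarrow> extnl (ext_env q D) (ext_env q D')"
  by (auto simp: extnl_def ext_env_def split: nat.splits)

lemma weak_step:
  assumes "ll_step derivable D N" "subenv D D'" "extnl D D'" "finite (dom D')"
  shows "ll_step (\<lambda>E P. (\<exists>D. derivable D P \<and> subenv D E \<and> extnl D E \<and> finite (dom E)) \<or> derivable E P) D' N"
  using assms
proof (induction arbitrary: D' rule: ll_step.induct)
  case (vl G x)
  show ?case
    apply (rule var_rule[where p=PatL])
    subgoal using vl by (auto simp: nonlin_def subenv_def extnl_def; metis option.exhaust)
    subgoal using vl by simp
    subgoal using vl by (auto simp: subenv_def)
    done
next
  case (vi G x)
  show ?case
    apply (rule var_rule[where p=PatI])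
    subgoal using vi by (auto simp: nonlin_def subenv_def extnl_def; metis option.exhaust)
    subgoal using vi by simp
    subgoal using vi by (auto simp: subenv_def)
    done
next
  case (vc G x)
  show ?case
    apply (rule var_rule[where p=PatC])
    subgoal using vc by (auto simp: nonlin_def subenv_def extnl_def; metis option.exhaust)
    subgoal using vc by simp
    subgoal using vc by (auto simp: subenv_def)
    done
next
  case (a G D S M N)
  have c: "compat_env (G ++ S) (D ++ S)" and e: "G ++ D ++ S = (G ++ S) ++ (D ++ S)"
    using app_split[OF a(1-4)] by auto
  define E1 where "E1 = G ++ S"
  define E2 where "E2 = D ++ S"
  define W where "W = D' |` (- dom (E1 ++ E2))"
  have f1: "finite (dom E1)" "finite (dom E2)" using ll_step_finite[OF a.hyps(5)] ll_step_finite[OF a.hyps(6)] E1_def E2_def by blast+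
  have sub: "subenv (E1 ++ E2) D'" "extnl (E1 ++ E2) D'" using a(9,10) e E1_def E2_def by auto
  have W: "nonlin W" using sub unfolding W_def nonlin_def extnl_def by (auto simp: restrict_map_def)
  have fW: "finite (dom W)" using a(11) unfolding W_def by (auto intro: finite_subset)
  have s1: "subenv E1 (E1 ++ W)" "extnl E1 (E1 ++ W)" "subenv E2 (E2 ++ W)" "extnl E2 (E2 ++ W)"
  proof -
    have Wd: "\<And>j. W j \<noteq> None \<Longrightarrow> E1 j = None \<and> E2 j = None"
      unfolding W_def by (auto simp: restrict_map_def map_add_def split: if_splits option.splits)
    show "subenv E1 (E1 ++ W)" "extnl E1 (E1 ++ W)" "subenv E2 (E2 ++ W)" "extnl E2 (E2 ++ W)"
      using W Wd unfolding subenv_def extnl_def nonlin_def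
      by (auto simp: map_add_def split: option.splits)
  qed
  have eq: "(E1 ++ W) ++ (E2 ++ W) = D'"
  proof (rule ext)
    fix j show "((E1 ++ W) ++ (E2 ++ W)) j = D' j"
      using sub(1) unfolding W_def subenv_def
      by (cases "(E1 ++ E2) j") (auto simp: map_add_def restrict_map_def split: option.splits)
  qed
  have "ll_step (\<lambda>E P. (\<exists>D. derivable D P \<and> subenv D E \<and> extnl D E \<and> finite (dom E)) \<or> derivable E P) ((E1 ++ W) ++ (E2 ++ W)) (PApp M N)"
  proof (rule app_intro)
    show "ll_step (\<lambda>E P. (\<exists>D. derivable D P \<and> subenv D E \<and> extnl D E \<and> finite (dom E)) \<or> derivable E P) (E1 ++ W) M"
      using s1 f1 fW unfolding E1_def by (intro a.IH(1)) auto
    show "ll_step (\<lambda>E P. (\<exists>D. derivable D P \<and> subenv D E \<and> extnl D E \<and> finite (dom E)) \<or> derivable E P) (E2 ++ W) N"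
      using s1 f1 fW unfolding E2_def by (intro a.IH(2)) auto
    show "compat_env (E1 ++ W) (E2 ++ W)" using compat_addW[OF c W] E1_def E2_def by simp
  qed
  then show ?case using eq by simp
next
  case (ll G M) then show ?case
    by (intro ll_step.ll ll.IH subenv_ext extnl_ext) auto
next
  case (li G M) then show ?case
    by (intro ll_step.li li.IH subenv_ext extnl_ext) auto
next
  case (lc G M) then show ?case
    by (intro ll_step.lc lc.IH subenv_ext extnl_ext) auto
next
  case (mi G M)
  have "nonlin D'" using mi(1,4,5) by (auto simp: subenv_def extnl_def nonlin_def) (metis option.exhaust)
  then show ?case using mi by (intro ll_step.mi) auto
next
  case (mc G M)
  have "nonlin D'" using mc(1,4,5) by (auto simp: subenv_def extnl_def nonlin_def) (metis option.exhaust)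
  then show ?case using mc by (intro ll_step.mc) auto
qed

lemma weak_der: "derivable D N \<Longrightarrow> subenv D D' \<Longrightarrow> extnl D D' \<Longrightarrow> finite (dom D') \<Longrightarrow> derivable D' N"
proof -
  assume "derivable D N" "subenv D D'" "extnl D D'" "finite (dom D')"
  then have "\<exists>D. derivable D N \<and> subenv D D' \<and> extnl D D' \<and> finite (dom D')" by blast
  then show ?thesis
  proof (rule derivable.coinduct)
    fix E P assume "\<exists>D. derivable D P \<and> subenv D E \<and> extnl D E \<and> finite (dom E)"
    then obtain D where h: "derivable D P" "subenv D E" "extnl D E" "finite (dom E)" by blast
    have "ll_step (\<lambda>E P. (\<exists>D. derivable D P \<and> subenv D E \<and> extnl D E \<and> finite (dom E)) \<or> derivable E P) E P"
      by (rule weak_step) (use h der_unfold in auto)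
    then show "\<exists>\<Gamma> M. E = \<Gamma> \<and> P = M \<and> ll_step (\<lambda>E P. (\<exists>D. derivable D P \<and> subenv D E \<and> extnl D E \<and> finite (dom E)) \<or> derivable E P) \<Gamma> M"
      by blast
  qed
qed



lemma sub_var': "subst_rel k N (PVar x) P \<Longrightarrow> P = (if x = k then N else PVar (dk k x))"
  by (erule sub_var) (auto simp: dk_def)

lemma del_upd_ne: "x \<noteq> k \<Longrightarrow> del k (G(x \<mapsto> p)) = (del k G)(dk k x \<mapsto> p)"
  by (auto simp: fun_eq_iff del_def dk_def)
lemma del_upd_eq: "del k (G(k \<mapsto> p)) = del k G"
  by (auto simp: fun_eq_iff del_def)
lemma del_dk: "x \<noteq> k \<Longrightarrow> del k G (dk k x) = G x"
  by (auto simp: del_def dk_def)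

lemma var_rule_add:
  assumes "nonlin A" "nonlin D" "D y = None \<or> D y = Some p" "finite (dom A)" "finite (dom D)"
  shows "ll_step X ((A(y \<mapsto> p)) ++ D) (PVar y)"
proof (rule var_rule[where p=p])
  show "nonlin ((A(y \<mapsto> p) ++ D)(y := None))" using assms(1,2)
    by (auto simp: nonlin_def map_add_def split: option.splits)
  show "finite (dom (A(y \<mapsto> p) ++ D))" using assms(4,5) by simp
  show "(A(y \<mapsto> p) ++ D) y = Some p" using assms(3) by (auto simp: map_add_def)
qed

lemma compat_ext_ins: "compat_env A D \<Longrightarrow> compat_env (ext_env q A) (ins 0 D)"
  by (auto simp: compat_env_def ext_env_def ins_def split: nat.splits)

definition RA :: "env \<Rightarrow> pterm \<Rightarrow> bool" where
  "RA E' P \<longleftrightarrow> (\<exists>E M k N D. E' = del k E ++ D \<and> derivable E M \<and> E k \<noteq> Some PatL \<and>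
     (E k = None \<or> derivable D N) \<and> nonlin D \<and> finite (dom D) \<and> compat_env (del k E) D \<and>
     subst_rel k N M P)"

lemma varA:
  assumes "nonlin G" "finite (dom G)" "G x = None" "(G(x \<mapsto> p)) k \<noteq> Some PatL"
    "(G(x \<mapsto> p)) k = None \<or> derivable D N" "nonlin D" "finite (dom D)"
    "compat_env (del k (G(x \<mapsto> p))) D" "subst_rel k N (PVar x) P"
  shows "ll_step (\<lambda>E P. RA E P \<or> derivable E P) (del k (G(x \<mapsto> p)) ++ D) P"
proof (cases "x = k")
  case True
  then have P: "P = N" using sub_var'[OF assms(9)] by simp
  have pn: "p \<noteq> PatL" using assms(4) True by simp
  have dN: "derivable D N" using assms(5) True by simp
  have dg: "del k (G(x \<mapsto> p)) = del k G" using True del_upd_eq by simp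
  have fg: "finite (dom (del k G))" by (rule finite_del[OF assms(2)])
  have ng: "nonlin (del k G)" by (rule nonlin_del[OF assms(1)])
  have "derivable (del k G ++ D) N"
  proof (rule weak_der[OF dN])
    show "subenv D (del k G ++ D)" by (auto simp: subenv_def)
    show "extnl D (del k G ++ D)" using ng by (auto simp: extnl_def nonlin_def map_add_def)
    show "finite (dom (del k G ++ D))" using fg assms(7) by simp
  qed
  then have "derivable (del k (G(x \<mapsto> p)) ++ D) N" by (simp only: dg)
  then have "ll_step derivable (del k (G(x \<mapsto> p)) ++ D) N" by (rule der_unfold[THEN iffD1])
  then show ?thesis unfolding P by (rule ll_step_mono') simp
next
  case False
  then have P: "P = PVar (dk k x)" using sub_var'[OF assms(9)] by simp
  have Dy: "D (dk k x) = None \<or> D (dk k x) = Some p"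
  proof -
    have "compat_env ((del k G)(dk k x \<mapsto> p)) D" using assms(8) by (simp only: del_upd_ne[OF False])
    then have "\<And>b. D (dk k x) = Some b \<Longrightarrow> p = b" unfolding compat_env_def
      by (metis fun_upd_same)
    then show ?thesis by (cases "D (dk k x)") auto
  qed
  show ?thesis unfolding P del_upd_ne[OF False]
    by (rule var_rule_add[OF nonlin_del[OF assms(1)] assms(6) Dy finite_del[OF assms(2)] assms(7)])
qed

lemma substA_step:
  assumes "ll_step derivable E M" "E k \<noteq> Some PatL" "E k = None \<or> derivable D N" "nonlin D"
    "finite (dom D)" "compat_env (del k E) D" "subst_rel k N M P"
  shows "ll_step (\<lambda>E P. RA E P \<or> derivable E P) (del k E ++ D) P"
  using assms
proof (induction arbitrary: k N D P rule: ll_step.induct)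
  case (vl G x) show ?case by (rule varA[OF vl.hyps vl.prems])
next
  case (vi G x) show ?case by (rule varA[OF vi.hyps vi.prems])
next
  case (vc G x) show ?case by (rule varA[OF vc.hyps vc.prems])
next
  case (a G D0 S M1 M2)
  have c: "compat_env (G ++ S) (D0 ++ S)" and e: "G ++ D0 ++ S = (G ++ S) ++ (D0 ++ S)"
    using app_split[OF a.hyps(1-4)] by auto
  define E1 where "E1 = G ++ S"
  define E2 where "E2 = D0 ++ S"
  have E: "G ++ D0 ++ S = E1 ++ E2" using e E1_def E2_def by simp
  have s1: "\<And>j b. E1 j = Some b \<Longrightarrow> (E1 ++ E2) j = Some b" using compat_sub[OF c[folded E1_def E2_def]] by blast
  have s2: "\<And>j b. E2 j = Some b \<Longrightarrow> (E1 ++ E2) j = Some b" by (simp add: map_add_def)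
  obtain P1 P2 where P: "P = PApp P1 P2" "subst_rel k N M1 P1" "subst_rel k N M2 P2"
    using a.prems(6) by (rule sub_app) auto
  have d1: "\<And>j b. del k E1 j = Some b \<Longrightarrow> del k (G ++ D0 ++ S) j = Some b"
    using s1 E by (auto simp: del_def)
  have d2: "\<And>j b. del k E2 j = Some b \<Longrightarrow> del k (G ++ D0 ++ S) j = Some b"
    using s2 E by (auto simp: del_def)
  have IH1: "ll_step (\<lambda>E P. RA E P \<or> derivable E P) (del k E1 ++ D) P1"
    unfolding E1_def
  proof (rule a.IH(1))
    show "(G ++ S) k \<noteq> Some PatL" using a.prems(1) s1 E E1_def by metis
    show "(G ++ S) k = None \<or> derivable D N" using a.prems(2) s1 E E1_def by (metis not_None_eq)
    show "compat_env (del k (G ++ S)) D" using compat_mono[OF d1 a.prems(5)] E1_def by simp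
  qed (use a.prems P in auto)
  have IH2: "ll_step (\<lambda>E P. RA E P \<or> derivable E P) (del k E2 ++ D) P2"
    unfolding E2_def
  proof (rule a.IH(2))
    show "(D0 ++ S) k \<noteq> Some PatL" using a.prems(1) s2 E E2_def by metis
    show "(D0 ++ S) k = None \<or> derivable D N" using a.prems(2) s2 E E2_def by (metis not_None_eq)
    show "compat_env (del k (D0 ++ S)) D" using compat_mono[OF d2 a.prems(5)] E2_def by simp
  qed (use a.prems P in auto)
  have eq: "del k (G ++ D0 ++ S) ++ D = (del k E1 ++ D) ++ (del k E2 ++ D)"
    unfolding E del_add by (rule ext) (simp add: map_add_def split: option.splits)
  show ?case unfolding eq P(1)
    by (rule app_intro[OF IH1 IH2]) (rule compat_addW[OF compat_del[OF c[folded E1_def E2_def]] a.prems(3)])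
next
  case (ll G M0)
  obtain P' where P: "P = PLam P'" "subst_rel (Suc k) (shift 0 N) M0 P'"
    using ll.prems(6) by (rule sub_lam) auto
  have "ll_step (\<lambda>E P. RA E P \<or> derivable E P) (del (Suc k) (ext_env PatL G) ++ ins 0 D) P'"
  proof (rule ll.IH)
    show "compat_env (del (Suc k) (ext_env PatL G)) (ins 0 D)"
      using compat_ext_ins[OF ll.prems(5)] by (simp add: ext_del)
    show "ext_env PatL G (Suc k) = None \<or> derivable (ins 0 D) (shift 0 N)"
      using ll.prems(2) shift_der by (auto simp: ext_Suc)
  qed (use ll.prems P nonlin_ins finite_ins in \<open>auto simp: ext_Suc\<close>)
  then show ?case unfolding P(1) by (intro ll_step.ll) (simp add: ext_env_add_ins ext_del)
next
  case (li G M0)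
  obtain P' where P: "P = PLamI P'" "subst_rel (Suc k) (shift 0 N) M0 P'"
    using li.prems(6) by (rule sub_lamI) auto
  have "ll_step (\<lambda>E P. RA E P \<or> derivable E P) (del (Suc k) (ext_env PatI G) ++ ins 0 D) P'"
  proof (rule li.IH)
    show "compat_env (del (Suc k) (ext_env PatI G)) (ins 0 D)"
      using compat_ext_ins[OF li.prems(5)] by (simp add: ext_del)
    show "ext_env PatI G (Suc k) = None \<or> derivable (ins 0 D) (shift 0 N)"
      using li.prems(2) shift_der by (auto simp: ext_Suc)
  qed (use li.prems P nonlin_ins finite_ins in \<open>auto simp: ext_Suc\<close>)
  then show ?case unfolding P(1) by (intro ll_step.li) (simp add: ext_env_add_ins ext_del)
next
  case (lc G M0)
  obtain P' where P: "P = PLamC P'" "subst_rel (Suc k) (shift 0 N) M0 P'"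
    using lc.prems(6) by (rule sub_lamC) auto
  have "ll_step (\<lambda>E P. RA E P \<or> derivable E P) (del (Suc k) (ext_env PatC G) ++ ins 0 D) P'"
  proof (rule lc.IH)
    show "compat_env (del (Suc k) (ext_env PatC G)) (ins 0 D)"
      using compat_ext_ins[OF lc.prems(5)] by (simp add: ext_del)
    show "ext_env PatC G (Suc k) = None \<or> derivable (ins 0 D) (shift 0 N)"
      using lc.prems(2) shift_der by (auto simp: ext_Suc)
  qed (use lc.prems P nonlin_ins finite_ins in \<open>auto simp: ext_Suc\<close>)
  then show ?case unfolding P(1) by (intro ll_step.lc) (simp add: ext_env_add_ins ext_del)
next
  case (mi G M0)
  obtain P' where P: "P = PBoxI P'" "subst_rel k N M0 P'"
    using mi.prems(6) by (rule sub_boxI) auto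
  have "ll_step (\<lambda>E P. RA E P \<or> derivable E P) (del k G ++ D) P'"
    by (rule mi.IH) (use mi.prems P in auto)
  then show ?case unfolding P(1)
    by (intro ll_step.mi) (use mi nonlin_add nonlin_del in auto)
next
  case (mc G M0)
  obtain P' where P: "P = PBoxC P'" "subst_rel k N M0 P'"
    using mc.prems(6) by (rule sub_boxC) auto
  have "RA (del k G ++ D) P'" unfolding RA_def using mc P by blast
  then show ?case unfolding P(1)
    by (intro ll_step.mc) (use mc nonlin_add nonlin_del finite_del in auto)
qed

lemma substA:
  assumes "derivable E M" "E k \<noteq> Some PatL" "E k = None \<or> derivable D N" "nonlin D"
    "finite (dom D)" "compat_env (del k E) D" "subst_rel k N M P"
  shows "derivable (del k E ++ D) P"
proof -
  have "RA (del k E ++ D) P" unfolding RA_def using assms by blast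
  then show ?thesis
  proof (rule derivable.coinduct)
    fix E' P assume "RA E' P"
    then obtain E M k N D where h: "E' = del k E ++ D" "derivable E M" "E k \<noteq> Some PatL"
     "E k = None \<or> derivable D N" "nonlin D" "finite (dom D)" "compat_env (del k E) D" "subst_rel k N M P"
      unfolding RA_def by blast
    have "ll_step (\<lambda>E P. RA E P \<or> derivable E P) E' P"
      unfolding h(1) by (rule substA_step) (use h der_unfold[THEN iffD1, OF h(2)] in auto)
    then show "\<exists>\<Gamma> M. E' = \<Gamma> \<and> P = M \<and> ll_step (\<lambda>E P. RA E P \<or> derivable E P) \<Gamma> M"
      by blast
  qed
qed



lemma cL1: "compat_env A B \<Longrightarrow> compat_env (A ++ B) D \<Longrightarrow> compat_env (A ++ D) B"
  unfolding compat_env_def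
proof (intro allI impI)
  fix j a b assume h: "\<forall>j a b. A j = Some a \<longrightarrow> B j = Some b \<longrightarrow> a = b \<and> a \<noteq> PatL"
    "\<forall>j a b. (A ++ B) j = Some a \<longrightarrow> D j = Some b \<longrightarrow> a = b \<and> a \<noteq> PatL"
    "(A ++ D) j = Some a" "B j = Some b"
  show "a = b \<and> a \<noteq> PatL"
  proof (cases "D j")
    case None
    then have "A j = Some a" using h(3) by (simp add: map_add_def)
    then show ?thesis using h(1,4) by blast
  next
    case (Some d)
    then have "a = d" using h(3) by simp
    moreover have AB: "(A ++ B) j = Some b" using h(4) by simp
    ultimately show ?thesis using h(2)[rule_format, OF AB Some] by blast
  qed
qed

lemma cL2: "compat_env (A ++ B) D \<Longrightarrow> (A ++ D) ++ B = (A ++ B) ++ D"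
proof (rule ext)
  fix j assume h: "compat_env (A ++ B) D"
  show "((A ++ D) ++ B) j = ((A ++ B) ++ D) j"
  proof (cases "B j")
    case None then show ?thesis by (simp add: map_add_def split: option.splits)
  next
    case (Some b)
    then have AB: "(A ++ B) j = Some b" by simp
    show ?thesis
    proof (cases "D j")
      case None then show ?thesis using Some by (simp add: map_add_def)
    next
      case (Some d)
      have "b = d" using h[unfolded compat_env_def, rule_format, OF AB Some] by blast
      then show ?thesis using Some \<open>B j = Some b\<close> by simp
    qed
  qed
qed

lemma cL3: "compat_env A B \<Longrightarrow> compat_env (A ++ B) D \<Longrightarrow> compat_env A (B ++ D)"
  unfolding compat_env_def
proof (intro allI impI)
  fix j a c assume h: "\<forall>j a b. A j = Some a \<longrightarrow> B j = Some b \<longrightarrow> a = b \<and> a \<noteq> PatL"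
    "\<forall>j a b. (A ++ B) j = Some a \<longrightarrow> D j = Some b \<longrightarrow> a = b \<and> a \<noteq> PatL"
    "A j = Some a" "(B ++ D) j = Some c"
  show "a = c \<and> a \<noteq> PatL"
  proof (cases "D j")
    case None
    then have "B j = Some c" using h(4) by (simp add: map_add_def)
    then show ?thesis using h(1,3) by blast
  next
    case (Some d)
    then have cd: "c = d" using h(4) by simp
    show ?thesis
    proof (cases "B j")
      case None
      then have AB: "(A ++ B) j = Some a" using h(3) by (simp add: map_add_def)
      show ?thesis using h(2)[rule_format, OF AB \<open>D j = Some d\<close>] cd by blast
    next
      case (Some b)
      then have "a = b" using h(1,3) by blast
      moreover have AB: "(A ++ B) j = Some b" using Some by simp
      ultimately show ?thesis using h(2)[rule_format, OF AB \<open>D j = Some d\<close>] cd by blast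
    qed
  qed
qed

lemma nonlin_empty: "nonlin Map.empty" by (simp add: nonlin_def)
lemma finite_empty_env: "finite (dom (Map.empty :: env))" by simp
lemma compat_empty: "compat_env A Map.empty" by (simp add: compat_env_def)

lemma substB:
  assumes "ll_step derivable E M" "E k = Some PatL" "derivable D N"
    "compat_env (del k E) D" "subst_rel k N M P"
  shows "ll_step derivable (del k E ++ D) P"
  using assms
proof (induction arbitrary: k N D P rule: ll_step.induct)
  case (vl G x)
  have True: "x = k" using vl.hyps(1) vl.prems(1) by (auto simp: nonlin_def split: if_splits)
  then have P: "P = N" using sub_var'[OF vl.prems(4)] by simp
  have dg: "del k (G(x \<mapsto> PatL)) = del k G" using True del_upd_eq by simp
  have fg: "finite (dom (del k G))" by (rule finite_del[OF vl.hyps(2)])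
  have ng: "nonlin (del k G)" by (rule nonlin_del[OF vl.hyps(1)])
  have fD: "finite (dom D)" using vl.prems(2) der_unfold ll_step_finite by blast
  have "derivable (del k G ++ D) N"
  proof (rule weak_der[OF vl.prems(2)])
    show "subenv D (del k G ++ D)" by (auto simp: subenv_def)
    show "extnl D (del k G ++ D)" using ng by (auto simp: extnl_def nonlin_def map_add_def)
    show "finite (dom (del k G ++ D))" using fg fD by simp
  qed
  then have "derivable (del k (G(x \<mapsto> PatL)) ++ D) N" by (simp only: dg)
  then show ?case unfolding P by (rule der_unfold[THEN iffD1])
next
  case (vi G x)
  then show ?case by (auto simp: nonlin_def split: if_splits)
next
  case (vc G x)
  then show ?case by (auto simp: nonlin_def split: if_splits)
next
  case (a G D0 S M1 M2)
  have c: "compat_env (G ++ S) (D0 ++ S)" and e: "G ++ D0 ++ S = (G ++ S) ++ (D0 ++ S)"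
    using app_split[OF a.hyps(1-4)] by auto
  define E1 where "E1 = G ++ S"
  define E2 where "E2 = D0 ++ S"
  have c': "compat_env E1 E2" using c E1_def E2_def by simp
  have E: "G ++ D0 ++ S = E1 ++ E2" using e E1_def E2_def by simp
  obtain P1 P2 where P: "P = PApp P1 P2" "subst_rel k N M1 P1" "subst_rel k N M2 P2"
    using a.prems(4) by (rule sub_app) auto
  have cd: "compat_env (del k E1 ++ del k E2) D" using a.prems(3) unfolding E del_add .
  have cdel: "compat_env (del k E1) (del k E2)" by (rule compat_del[OF c'])
  have cd1: "compat_env (del k E1) D" by (rule compat_mono[OF _ cd]) (rule compat_sub[OF cdel])
  have cd2: "compat_env (del k E2) D" by (rule compat_mono[OF _ cd]) (simp add: map_add_def)
  have kk: "(E1 ++ E2) k = Some PatL" using a.prems(1) E by simp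
  show ?case
  proof (cases "E2 k")
    case None
    then have k1: "E1 k = Some PatL" using kk by (simp add: map_add_def)
    have IH1: "ll_step derivable (del k E1 ++ D) P1"
      by (rule a.IH(1)[folded E1_def, OF k1 a.prems(2) cd1 P(2)])
    have "derivable (del k E2 ++ Map.empty) P2"
    proof -
      have d2: "derivable E2 M2" unfolding E2_def by (rule der_unfold[THEN iffD2, OF a.hyps(6)])
      show ?thesis
        by (rule substA[OF d2 _ _ nonlin_empty finite_empty_env compat_empty P(3)]) (simp_all add: None)
    qed
    then have IH2: "ll_step derivable (del k E2) P2" using der_unfold[THEN iffD1] by simp
    have "ll_step derivable ((del k E1 ++ D) ++ del k E2) (PApp P1 P2)"
      by (rule app_intro[OF IH1 IH2 cL1[OF cdel cd]])
    then show ?thesis unfolding P(1) E del_add cL2[OF cd] .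
  next
    case (Some b)
    then have k2: "E2 k = Some PatL" using kk by (simp add: map_add_def)
    have k1: "E1 k = None" proof (cases "E1 k")
      case (Some a) then show ?thesis using c' k2 unfolding compat_env_def by blast
    qed
    have IH2: "ll_step derivable (del k E2 ++ D) P2"
      by (rule a.IH(2)[folded E2_def, OF k2 a.prems(2) cd2 P(3)])
    have "derivable (del k E1 ++ Map.empty) P1"
    proof -
      have d1: "derivable E1 M1" unfolding E1_def by (rule der_unfold[THEN iffD2, OF a.hyps(5)])
      show ?thesis
        by (rule substA[OF d1 _ _ nonlin_empty finite_empty_env compat_empty P(2)]) (simp_all add: k1)
    qed
    then have IH1: "ll_step derivable (del k E1) P1" using der_unfold[THEN iffD1] by simp
    have "ll_step derivable (del k E1 ++ (del k E2 ++ D)) (PApp P1 P2)"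
      by (rule app_intro[OF IH1 IH2 cL3[OF cdel cd]])
    then show ?thesis unfolding P(1) E del_add by simp
  qed
next
  case (ll G M0)
  obtain P' where P: "P = PLam P'" "subst_rel (Suc k) (shift 0 N) M0 P'"
    using ll.prems(4) by (rule sub_lam) auto
  have "ll_step derivable (del (Suc k) (ext_env PatL G) ++ ins 0 D) P'"
  proof (rule ll.IH)
    show "compat_env (del (Suc k) (ext_env PatL G)) (ins 0 D)"
      using compat_ext_ins[OF ll.prems(3)] by (simp add: ext_del)
  qed (use ll.prems P shift_der in \<open>auto simp: ext_Suc\<close>)
  then show ?case unfolding P(1) by (intro ll_step.ll) (simp add: ext_env_add_ins ext_del)
next
  case (li G M0)
  obtain P' where P: "P = PLamI P'" "subst_rel (Suc k) (shift 0 N) M0 P'"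
    using li.prems(4) by (rule sub_lamI) auto
  have "ll_step derivable (del (Suc k) (ext_env PatI G) ++ ins 0 D) P'"
  proof (rule li.IH)
    show "compat_env (del (Suc k) (ext_env PatI G)) (ins 0 D)"
      using compat_ext_ins[OF li.prems(3)] by (simp add: ext_del)
  qed (use li.prems P shift_der in \<open>auto simp: ext_Suc\<close>)
  then show ?case unfolding P(1) by (intro ll_step.li) (simp add: ext_env_add_ins ext_del)
next
  case (lc G M0)
  obtain P' where P: "P = PLamC P'" "subst_rel (Suc k) (shift 0 N) M0 P'"
    using lc.prems(4) by (rule sub_lamC) auto
  have "ll_step derivable (del (Suc k) (ext_env PatC G) ++ ins 0 D) P'"
  proof (rule lc.IH)
    show "compat_env (del (Suc k) (ext_env PatC G)) (ins 0 D)"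
      using compat_ext_ins[OF lc.prems(3)] by (simp add: ext_del)
  qed (use lc.prems P shift_der in \<open>auto simp: ext_Suc\<close>)
  then show ?case unfolding P(1) by (intro ll_step.lc) (simp add: ext_env_add_ins ext_del)
next
  case (mi G M0)
  then show ?case using mi.hyps(1) mi.prems(1) unfolding nonlin_def by blast
next
  case (mc G M0)
  then show ?case using mc.hyps(1) mc.prems(1) unfolding nonlin_def by blast
qed



lemma basic_sr:
  assumes "derivable E L" "basic_red L P"
  shows "derivable E P"
  using assms(2)
proof cases
  case (1 N M)
  have "ll_step derivable E (PApp (PLam M) N)" using assms(1) 1 der_unfold by blast
  then obtain E1 E2 where e: "E = E1 ++ E2" "compat_env E1 E2" "ll_step derivable E1 (PLam M)"
    "ll_step derivable E2 N" by (rule app_elim)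
  from e(3) have m: "ll_step derivable (ext_env PatL E1) M" by (rule ll_lam) simp
  have "ll_step derivable (del 0 (ext_env PatL E1) ++ E2) P"
    by (rule substB[OF m _ der_unfold[THEN iffD2, OF e(4)] _ 1(2)]) (simp_all add: ext_0 del_ext0 e(2))
  then show ?thesis unfolding del_ext0 e(1) by (rule der_unfold[THEN iffD2])
next
  case (2 N M)
  have "ll_step derivable E (PApp (PLamI M) (PBoxI N))" using assms(1) 2 der_unfold by blast
  then obtain E1 E2 where e: "E = E1 ++ E2" "compat_env E1 E2" "ll_step derivable E1 (PLamI M)"
    "ll_step derivable E2 (PBoxI N)" by (rule app_elim)
  from e(3) have m: "ll_step derivable (ext_env PatI E1) M" by (rule ll_lamI) simp
  from e(4) have n: "nonlin E2" "ll_step derivable E2 N" by (rule ll_boxI; simp)+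
  have "derivable (del 0 (ext_env PatI E1) ++ E2) P"
    by (rule substA[OF der_unfold[THEN iffD2, OF m] _ _ n(1) ll_step_finite[OF n(2)] _ 2(2)])
       (simp_all add: ext_0 del_ext0 e(2) der_unfold[THEN iffD2, OF n(2)])
  then show ?thesis unfolding del_ext0 e(1) .
next
  case (3 N M)
  have "ll_step derivable E (PApp (PLamC M) (PBoxC N))" using assms(1) 3 der_unfold by blast
  then obtain E1 E2 where e: "E = E1 ++ E2" "compat_env E1 E2" "ll_step derivable E1 (PLamC M)"
    "ll_step derivable E2 (PBoxC N)" by (rule app_elim)
  from e(3) have m: "ll_step derivable (ext_env PatC E1) M" by (rule ll_lamC) simp
  from e(4) have n: "nonlin E2" "finite (dom E2)" "derivable E2 N" by (rule ll_boxC; simp)+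
  have "derivable (del 0 (ext_env PatC E1) ++ E2) P"
    by (rule substA[OF der_unfold[THEN iffD2, OF m] _ _ n(1) n(2) _ 3(2)])
       (simp_all add: ext_0 del_ext0 e(2) n(3))
  then show ?thesis unfolding del_ext0 e(1) .
qed

lemma ctx_sr: "derivable E (fill C L) \<Longrightarrow> basic_red L P \<Longrightarrow> derivable E (fill C P)"
proof (induction C arbitrary: E)
  case Hole then show ?case using basic_sr by simp
next
  case (CAppL C N)
  have "ll_step derivable E (PApp (fill C L) N)" using der_unfold[THEN iffD1, OF CAppL.prems(1)] by simp
  then obtain E1 E2 where e: "E = E1 ++ E2" "compat_env E1 E2" "ll_step derivable E1 (fill C L)"
    "ll_step derivable E2 N" by (rule app_elim)
  have "derivable E1 (fill C P)" using CAppL.IH[OF der_unfold[THEN iffD2, OF e(3)] CAppL.prems(2)] .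
  then have "ll_step derivable (E1 ++ E2) (PApp (fill C P) N)"
    using app_intro[OF der_unfold[THEN iffD1] e(4) e(2)] by blast
  then show ?case unfolding e(1) fill.simps by (rule der_unfold[THEN iffD2])
next
  case (CAppR M C)
  have "ll_step derivable E (PApp M (fill C L))" using der_unfold[THEN iffD1, OF CAppR.prems(1)] by simp
  then obtain E1 E2 where e: "E = E1 ++ E2" "compat_env E1 E2" "ll_step derivable E1 M"
    "ll_step derivable E2 (fill C L)" by (rule app_elim)
  have "derivable E2 (fill C P)" using CAppR.IH[OF der_unfold[THEN iffD2, OF e(4)] CAppR.prems(2)] .
  then have "ll_step derivable (E1 ++ E2) (PApp M (fill C P))"
    using app_intro[OF e(3) der_unfold[THEN iffD1] e(2)] by blast
  then show ?case unfolding e(1) fill.simps by (rule der_unfold[THEN iffD2])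
next
  case (CLam C)
  have "ll_step derivable E (PLam (fill C L))" using der_unfold[THEN iffD1, OF CLam.prems(1)] by simp
  then have "ll_step derivable (ext_env PatL E) (fill C L)" by (rule ll_lam) simp
  then have "derivable (ext_env PatL E) (fill C P)" using CLam.IH der_unfold CLam.prems(2) by blast
  then have "ll_step derivable E (PLam (fill C P))" using ll_step.ll der_unfold by blast
  then show ?case unfolding fill.simps by (rule der_unfold[THEN iffD2])
next
  case (CLamI C)
  have "ll_step derivable E (PLamI (fill C L))" using der_unfold[THEN iffD1, OF CLamI.prems(1)] by simp
  then have "ll_step derivable (ext_env PatI E) (fill C L)" by (rule ll_lamI) simp
  then have "derivable (ext_env PatI E) (fill C P)" using CLamI.IH der_unfold CLamI.prems(2) by blast
  then have "ll_step derivable E (PLamI (fill C P))" using ll_step.li der_unfold by blast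
  then show ?case unfolding fill.simps by (rule der_unfold[THEN iffD2])
next
  case (CLamC C)
  have "ll_step derivable E (PLamC (fill C L))" using der_unfold[THEN iffD1, OF CLamC.prems(1)] by simp
  then have "ll_step derivable (ext_env PatC E) (fill C L)" by (rule ll_lamC) simp
  then have "derivable (ext_env PatC E) (fill C P)" using CLamC.IH der_unfold CLamC.prems(2) by blast
  then have "ll_step derivable E (PLamC (fill C P))" using ll_step.lc der_unfold by blast
  then show ?case unfolding fill.simps by (rule der_unfold[THEN iffD2])
next
  case (CBoxI C)
  have "ll_step derivable E (PBoxI (fill C L))" using der_unfold[THEN iffD1, OF CBoxI.prems(1)] by simp
  then have n: "nonlin E" "ll_step derivable E (fill C L)" by (rule ll_boxI; simp)+
  then have "derivable E (fill C P)" using CBoxI.IH der_unfold CBoxI.prems(2) by blast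
  then have "ll_step derivable E (PBoxI (fill C P))" using ll_step.mi n(1) der_unfold by blast
  then show ?case unfolding fill.simps by (rule der_unfold[THEN iffD2])
next
  case (CBoxC C)
  have "ll_step derivable E (PBoxC (fill C L))" using der_unfold[THEN iffD1, OF CBoxC.prems(1)] by simp
  then have n: "nonlin E" "finite (dom E)" "derivable E (fill C L)" by (rule ll_boxC; simp)+
  then have "derivable E (fill C P)" using CBoxC.IH CBoxC.prems(2) by blast
  then have "ll_step derivable E (PBoxC (fill C P))" using ll_step.mc n(1,2) by blast
  then show ?case unfolding fill.simps by (rule der_unfold[THEN iffD2])
qed

theorem mainTheorem4:
  assumes "derivable \<Gamma> M"
    and "red M N"
  shows "derivable \<Gamma> N"
  using assms ctx_sr unfolding red_def by blast

end
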